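(* The Bass stable rank of the ring $s'(\mathbb{Z}^d)$ (for any $d\ge1$) is $1$.
   Context: For $\mathbf{n}\in\mathbb{Z}^d$, $\|\mathbf{n}\|_1$ denotes the $1$-norm. $s'(\mathbb{Z}^d)$ is the set of all maps $\mathbf{a}:\mathbb{Z}^d\to\mathbb{C}$ for which there exist $M>0$ and $k\in\mathbb{N}$ with $|\mathbf{a}(\mathbf{n})|\le M(1+\|\mathbf{n}\|_1)^k$ for all $\mathbf{n}\in\mathbb{Z}^d$; it is a commutative unital ring under pointwise operations, with unit the constant function $1$. For a commutative unital ring $R$ with $1\neq 0$: an $N$-tuple $(a_1,\dots,a_N)\in R^N$ is invertible (unimodular) if there is $(b_1,\dots,b_N)\in R^N$ with $b_1a_1+\cdots+b_Na_N=1$; $U_N(R)$ denotes the set of such tuples. An $(N+1)$-tuple $(a_1,\dots,a_N,\alpha)\in U_{N+1}(R)$ is reducible if there exist $h_1,\dots,h_N\in R$ with $(a_1+h_1\alpha,\dots,a_N+h_N\alpha)\in U_N(R)$. The Bass stable rank of $R$ is the smallest integer $N\ge1$ such that every element of $U_{N+1}(R)$ is reducible (and $\infty$ if no such $N$ exists). *)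

theory Defs
  imports "HOL-Analysis.Analysis" "HOL-Library.Extended_Nat"
begin

text \<open>The ring s'(Z^d): points of Z^d are functions 'd \<Rightarrow> int for a finite
  (nonempty) index type 'd, so d = CARD('d) \<ge> 1.  Ring operations are pointwise.\<close>

definition sprime :: "(('d::finite \<Rightarrow> int) \<Rightarrow> complex) set" where
  "sprime = {a. \<exists>M::real>0. \<exists>k::nat. \<forall>n.
      cmod (a n) \<le> M * (1 + real_of_int (\<Sum>i\<in>UNIV. \<bar>n i\<bar>)) ^ k}"

definition unimodular :: "('a \<Rightarrow> complex) set \<Rightarrow> nat \<Rightarrow> ('a \<Rightarrow> complex) list \<Rightarrow> bool" where
  "unimodular S N as \<longleftrightarrow> length as = N \<and> set as \<subseteq> S \<and>
     (\<exists>bs. length bs = N \<and> set bs \<subseteq> S \<and>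
        (\<lambda>n. \<Sum>i<N. (bs ! i) n * (as ! i) n) = (\<lambda>_. 1))"

definition reducible :: "('a \<Rightarrow> complex) set \<Rightarrow> ('a \<Rightarrow> complex) list \<Rightarrow> ('a \<Rightarrow> complex) \<Rightarrow> bool" where
  "reducible S as \<alpha> \<longleftrightarrow>
     (\<exists>hs. length hs = length as \<and> set hs \<subseteq> S \<and>
        unimodular S (length as) (map2 (\<lambda>a h. \<lambda>n. a n + h n * \<alpha> n) as hs))"

definition stable_rank_cond :: "('a \<Rightarrow> complex) set \<Rightarrow> nat \<Rightarrow> bool" where
  "stable_rank_cond S N \<longleftrightarrow>
     (\<forall>as \<alpha>. unimodular S (N + 1) (as @ [\<alpha>]) \<longrightarrow> reducible S as \<alpha>)"

definition bass_stable_rank :: "('a \<Rightarrow> complex) set \<Rightarrow> enat" where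
  "bass_stable_rank S =
     (if \<exists>N\<ge>1. stable_rank_cond S N
      then enat (LEAST N. N \<ge> 1 \<and> stable_rank_cond S N) else \<infinity>)"

end

theory Submission
  imports Defs
begin

lemma pt_bound:
  fixes a b c al :: complex and P :: real
  assumes P: "P \<ge> 1" and hb: "cmod b \<le> P" and hc: "cmod c \<le> P"
    and eq: "b * a + c * al = 1"
  shows "cmod (a + (if cmod a \<ge> 1/(4*P) then 0 else 1) * al) \<ge> 1/(4*P)"
proof (cases "cmod a \<ge> 1/(4*P)")
  case True then show ?thesis by simp
next
  case False
  hence a: "cmod a < 1/(4*P)" by simp
  have "cmod (b*a) \<le> P * cmod a" using hb by (simp add: norm_mult mult_right_mono)
  also have "\<dots> < P * (1/(4*P))" using a P by (intro mult_strict_left_mono) auto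
  also have "\<dots> = 1/4" using P by simp
  finally have ba: "cmod (b*a) < 1/4" .
  have "c*al = 1 - b*a" using eq by (simp add: algebra_simps)
  hence "cmod (c*al) \<ge> 1 - cmod (b*a)"
    using norm_triangle_ineq2[of 1 "b*a"] by simp
  hence ca: "cmod c * cmod al > 3/4" using ba by (simp add: norm_mult)
  have "cmod c * cmod al \<le> P * cmod al" using hc by (simp add: mult_right_mono)
  hence "P * cmod al > 3/4" using ca by linarith
  hence al: "cmod al > 3/(4*P)" using P by (simp add: field_simps)
  have "cmod (a + al) \<ge> cmod al - cmod a"
    by (metis add.commute norm_diff_ineq)
  moreover have "3/(4*P) - 1/(4*P) \<ge> 1/(4*P)" using P by (simp add: field_simps)
  ultimately show ?thesis using False al a by simp
qed

lemma w_ge1: "(1::real) \<le> 1 + real_of_int (\<Sum>i\<in>UNIV. \<bar>(n::'d::finite\<Rightarrow>int) i\<bar>)"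
  by (simp add: sum_nonneg)

lemma w_pow_mono:
  "(1 + real_of_int (\<Sum>i\<in>UNIV. \<bar>(n::'d::finite\<Rightarrow>int) i\<bar>)) ^ k
   \<le> (1 + real_of_int (\<Sum>i\<in>UNIV. \<bar>n i\<bar>)) ^ (k + j)"
  using w_ge1[of n] by (intro power_increasing) auto

lemma cond1: "stable_rank_cond (sprime :: (('d::finite \<Rightarrow> int) \<Rightarrow> complex) set) 1"
  unfolding stable_rank_cond_def
proof (intro allI impI)
  fix as and al :: "('d \<Rightarrow> int) \<Rightarrow> complex"
  assume u: "unimodular sprime (1 + 1) (as @ [al])"
  define w where "w = (\<lambda>n::'d\<Rightarrow>int. 1 + real_of_int (\<Sum>i\<in>UNIV. \<bar>n i\<bar>))"
  have w1: "\<And>n. w n \<ge> 1" unfolding w_def by (rule w_ge1)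
  have wm: "\<And>n k j. w n ^ k \<le> w n ^ (k + j)" unfolding w_def by (rule w_pow_mono)
  from u have "length as = 1" unfolding unimodular_def by simp
  then obtain a where as: "as = [a]" by (cases as) auto
  have aS: "a \<in> sprime" and alS: "al \<in> sprime" using u unfolding unimodular_def as by auto
  from u obtain bs where bs: "length bs = 2" "set bs \<subseteq> sprime"
    and sum: "(\<lambda>n. \<Sum>i<2. (bs ! i) n * ((as @ [al]) ! i) n) = (\<lambda>_. 1)"
  proof -
    from u obtain bs where "length bs = 1 + 1" "set bs \<subseteq> sprime"
      "(\<lambda>n. \<Sum>i<1+1. (bs ! i) n * ((as @ [al]) ! i) n) = (\<lambda>_. 1)"
      unfolding unimodular_def by blast
    thus ?thesis using that by (simp only: one_add_one)
  qed
  from bs(1) obtain b c where bc: "bs = [b, c]"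
    by (cases bs; cases "tl bs") auto
  have bS: "b \<in> sprime" and cS: "c \<in> sprime" using bs(2) bc by auto
  have eq: "\<And>n. b n * a n + c n * al n = 1"
  proof -
    fix n
    have "(\<Sum>i<2. (bs ! i) n * ((as @ [al]) ! i) n) = 1" using sum by metis
    thus "b n * a n + c n * al n = 1" by (simp add: bc as numeral_2_eq_2)
  qed
  obtain M1 k1 where M1: "M1 > 0" "\<And>n. cmod (b n) \<le> M1 * w n ^ k1"
    using bS unfolding sprime_def w_def by auto
  obtain M2 k2 where M2: "M2 > 0" "\<And>n. cmod (c n) \<le> M2 * w n ^ k2"
    using cS unfolding sprime_def w_def by auto
  obtain Ma ka where Ma: "Ma > 0" "\<And>n. cmod (a n) \<le> Ma * w n ^ ka"
    using aS unfolding sprime_def w_def by auto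
  obtain Ml kl where Ml: "Ml > 0" "\<And>n. cmod (al n) \<le> Ml * w n ^ kl"
    using alS unfolding sprime_def w_def by auto
  define P where "P = (\<lambda>n. (M1 + M2 + 1) * w n ^ (k1 + k2))"
  have P1: "\<And>n. P n \<ge> 1"
  proof -
    fix n
    have "1 \<le> w n ^ (k1+k2)" using w1[of n] by simp
    moreover have "1 \<le> M1 + M2 + 1" using M1 M2 by simp
    ultimately show "P n \<ge> 1" unfolding P_def using mult_mono[of 1 "M1+M2+1" 1] by fastforce
  qed
  have Pb: "\<And>n. cmod (b n) \<le> P n"
  proof -
    fix n
    have "cmod (b n) \<le> M1 * w n ^ k1" by (rule M1(2))
    also have "\<dots> \<le> M1 * w n ^ (k1 + k2)" using M1(1) wm by (simp add: mult_left_mono)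
    also have "\<dots> \<le> P n" unfolding P_def using M2(1) w1[of n]
      by (intro mult_right_mono) auto
    finally show "cmod (b n) \<le> P n" .
  qed
  have Pc: "\<And>n. cmod (c n) \<le> P n"
  proof -
    fix n
    have "cmod (c n) \<le> M2 * w n ^ k2" by (rule M2(2))
    also have "\<dots> \<le> M2 * w n ^ (k2 + k1)" using M2(1) wm by (simp add: mult_left_mono)
    also have "\<dots> \<le> P n" unfolding P_def using M1(1) w1[of n]
      by (simp add: add.commute mult_right_mono)
    finally show "cmod (c n) \<le> P n" .
  qed
  define h where "h = (\<lambda>n. if cmod (a n) \<ge> 1/(4*P n) then 0 else (1::complex))"
  define f where "f = (\<lambda>n. a n + h n * al n)"
  have fb: "\<And>n. cmod (f n) \<ge> 1/(4 * P n)"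
    unfolding f_def h_def using pt_bound[OF P1 Pb Pc eq] .
  have fnz: "\<And>n. f n \<noteq> 0"
  proof -
    fix n have "1/(4 * P n) > 0" using P1[of n] by simp
    thus "f n \<noteq> 0" using fb[of n] by auto
  qed
  define g where "g = (\<lambda>n. 1 / f n)"
  have hS: "h \<in> sprime" unfolding sprime_def h_def
  proof (rule CollectI, rule exI[of _ 1], intro conjI exI[of _ 0] allI)
  qed auto
  have fS: "f \<in> sprime" unfolding sprime_def
  proof (rule CollectI, rule exI[of _ "Ma + Ml"], intro conjI exI allI)
    show "Ma + Ml > 0" using Ma Ml by simp
    fix n
    have h1: "cmod (h n) \<le> 1" unfolding h_def by simp
    have "cmod (f n) \<le> cmod (a n) + cmod (h n) * cmod (al n)"
      unfolding f_def by (metis norm_triangle_ineq norm_mult order_trans order_refl)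
    also have "\<dots> \<le> cmod (a n) + cmod (al n)" using h1
      by (simp add: mult_left_le_one_le)
    also have "\<dots> \<le> Ma * w n ^ (ka + kl) + Ml * w n ^ (kl + ka)"
      using Ma Ml wm[of n ka kl] wm[of n kl ka]
      by (meson add_mono order_trans mult_left_mono less_imp_le)
    also have "\<dots> = (Ma + Ml) * w n ^ (ka + kl)" by (simp add: algebra_simps)
    finally show "cmod (f n) \<le> (Ma + Ml) * (1 + real_of_int (\<Sum>i\<in>UNIV. \<bar>n i\<bar>)) ^ (ka + kl)"
      unfolding w_def .
  qed
  have gS: "g \<in> sprime" unfolding sprime_def
  proof (rule CollectI, rule exI[of _ "4*(M1 + M2 + 1)"], intro conjI exI allI)
    show "4*(M1 + M2 + 1) > 0" using M1 M2 by simp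
    fix n
    have Pp: "P n > 0" using P1[of n] by simp
    have g1: "cmod (g n) = 1 / cmod (f n)" unfolding g_def by (simp add: norm_divide)
    have q: "1/(4*P n) > 0" using Pp by simp
    have "1 / cmod (f n) \<le> 1 / (1/(4*P n))" using fb[of n] q
      by (intro frac_le) auto
    also have "\<dots> = 4*(M1+M2+1) * w n ^ (k1+k2)" unfolding P_def by simp
    finally have "1 / cmod (f n) \<le> 4*(M1+M2+1) * w n ^ (k1+k2)" .
    thus "cmod (g n) \<le> 4*(M1 + M2 + 1) * (1 + real_of_int (\<Sum>i\<in>UNIV. \<bar>n i\<bar>)) ^ (k1+k2)"
      unfolding w_def g1 .
  qed
  show "reducible sprime as al"
    unfolding reducible_def
  proof (rule exI[of _ "[h]"], intro conjI)
    show "length [h] = length as" using as by simp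
    show "set [h] \<subseteq> sprime" using hS by simp
    have m: "map2 (\<lambda>a h. \<lambda>n. a n + h n * al n) as [h] = [f]" using as f_def by simp
    show "unimodular sprime (length as) (map2 (\<lambda>a h. \<lambda>n. a n + h n * al n) as [h])"
      unfolding m unimodular_def using as fS gS fnz
      by (intro conjI exI[of _ "[g]"]) (auto simp: g_def)
  qed
qed

theorem theorem1p4:
  shows "bass_stable_rank (sprime :: (('d::finite \<Rightarrow> int) \<Rightarrow> complex) set) = 1"
proof -
  have "(LEAST N. N \<ge> 1 \<and> stable_rank_cond (sprime :: (('d::finite \<Rightarrow> int) \<Rightarrow> complex) set) N) = 1"
    by (rule Least_equality) (use cond1 in auto)
  thus ?thesis unfolding bass_stable_rank_def using cond1
    by (auto simp: one_enat_def)
qed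

end
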